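(* Let $n\ge2$ and let $G$ be a finite simple graph with $n$ vertices. Then $s(\{\rho(B)\}*\{I(G)\})\subseteq 2\mathbb{Z}$ for every connected bipartite graph $B$ with $n$ vertices if and only if every vertex of $G$ has even degree (i.e. every connected component of $G$ is Eulerian). In the notation of orthogonality classes: $I^{-1}\big(\rho(\{\text{connected bipartite graphs on } n \text{ vertices}\})^{\perp_{\mathscr P(2\mathbb Z)}}\big)$ is exactly the set of graphs on $n$ vertices all of whose components are Eulerian.
   Context: Take $R=\mathbb{Z}$. An $R$-weighted complete graph $K$ is a finite vertex set with a weight $v_K(e)\in R$ on every 2-subset $e$. For $H,G'$ with equal vertex counts and a bijection $f:V(H)\to V(G')$, $H*_fG'$ has vertex set $V(H)$ and weights $v_H(\{x,y\})v_{G'}(\{f(x),f(y)\})$; $H*G'=\{H*_fG': f \text{ bijection}\}$. $s(K)=\sum_e v_K(e)$, $s(\mathscr K)=\{s(K):K\in\mathscr K\}$. For a simple graph $G$, $I(G)$ has weight $1$ on edges and $0$ on non-edges; for connected $B$, $\rho(B)$ has weight $\rho_B(x,y)$ (graph distance). For a set $\mathscr H$ of weighted complete graphs on $n$ vertices and a family $\mathscr A$ of subsets of $\mathbb Z$, $\mathscr H^{\perp_{\mathscr A}}$ is the class of weighted complete graphs $X$ on $n$ vertices with $s(H*X)\in\mathscr A$ for all $H\in\mathscr H$; $\mathscr P(2\mathbb Z)$ is the family of all subsets of the even integers; $I^{-1}$ of a class means the simple graphs $G$ with $I(G)$ in that class. *)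

theory Defs
  imports Main
begin

definition pairs :: "'a set \<Rightarrow> 'a set set" where
  "pairs V = {e. e \<subseteq> V \<and> card e = 2}"

definition simple_graph :: "'a set \<Rightarrow> 'a set set \<Rightarrow> bool" where
  "simple_graph V E \<longleftrightarrow> finite V \<and> E \<subseteq> pairs V"

definition walk :: "'a set set \<Rightarrow> 'a list \<Rightarrow> bool" where
  "walk E xs \<longleftrightarrow> xs \<noteq> [] \<and> (\<forall>i. Suc i < length xs \<longrightarrow> {xs ! i, xs ! Suc i} \<in> E)"

definition connected_graph :: "'a set \<Rightarrow> 'a set set \<Rightarrow> bool" where
  "connected_graph V E \<longleftrightarrow>
     (\<forall>x\<in>V. \<forall>y\<in>V. \<exists>xs. walk E xs \<and> hd xs = x \<and> last xs = y)"

definition bipartite :: "'a set \<Rightarrow> 'a set set \<Rightarrow> bool" where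
  "bipartite V E \<longleftrightarrow> (\<exists>A. A \<subseteq> V \<and> (\<forall>e\<in>E. card (e \<inter> A) = 1))"

definition degree :: "'a set set \<Rightarrow> 'a \<Rightarrow> nat" where
  "degree E v = card {e \<in> E. v \<in> e}"

text \<open>Weighted complete graphs on a vertex set V: weights on 2-subsets, 'a set => int.\<close>

definition I_w :: "'a set set \<Rightarrow> 'a set \<Rightarrow> int" where
  "I_w E e = (if e \<in> E then 1 else 0)"

definition rho_w :: "'a set set \<Rightarrow> 'a set \<Rightarrow> int" where
  "rho_w E e = int (LEAST k. \<exists>xs. walk E xs \<and> {hd xs, last xs} = e \<and> length xs = Suc k)"

definition wsum :: "'a set \<Rightarrow> ('a set \<Rightarrow> int) \<Rightarrow> int" where
  "wsum V w = (\<Sum>e\<in>pairs V. w e)"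

definition wprod_f :: "('a set \<Rightarrow> int) \<Rightarrow> ('b set \<Rightarrow> int) \<Rightarrow> ('a \<Rightarrow> 'b) \<Rightarrow> 'a set \<Rightarrow> int" where
  "wprod_f H G f = (\<lambda>e. H e * G (f ` e))"

definition wprod :: "'a set \<Rightarrow> 'b set \<Rightarrow> ('a set \<Rightarrow> int) \<Rightarrow> ('b set \<Rightarrow> int) \<Rightarrow> ('a set \<Rightarrow> int) set" where
  "wprod V W H G = {wprod_f H G f | f. bij_betw f V W}"

end

theory Submission
  imports Defs
begin

lemma walk_Cons2: "walk E (x#y#ys) \<longleftrightarrow> {x,y} \<in> E \<and> walk E (y#ys)"
proof
  assume "walk E (x#y#ys)"
  then have all: "\<And>i. Suc i < length (x#y#ys) \<Longrightarrow> {(x#y#ys)!i, (x#y#ys)!Suc i} \<in> E"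
    unfolding walk_def by blast
  have "walk E (y#ys)" unfolding walk_def
  proof (intro conjI allI impI)
    fix i assume "Suc i < length (y#ys)"
    then show "{(y#ys)!i, (y#ys)!Suc i} \<in> E" using all[of "Suc i"] by simp
  qed simp
  then show "{x,y} \<in> E \<and> walk E (y#ys)" using all[of 0] by simp
next
  assume a: "{x,y} \<in> E \<and> walk E (y#ys)"
  show "walk E (x#y#ys)" unfolding walk_def
  proof (intro conjI allI impI)
    fix i assume "Suc i < length (x#y#ys)"
    then show "{(x#y#ys) ! i, (x#y#ys) ! Suc i} \<in> E" using a unfolding walk_def
      by (cases i) auto
  qed simp
qed



lemma edge_par: "card {x,y} = 2 \<Longrightarrow> card ({x,y} \<inter> A) = 1 \<Longrightarrow> (x \<in> A \<longleftrightarrow> y \<notin> A)"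
  by (cases "x\<in>A"; cases "y\<in>A") (auto simp: Int_insert_left)



lemma walk_parity:
  assumes e: "\<forall>e\<in>EB. card e = 2 \<and> card (e \<inter> A) = 1" and w: "walk EB xs"
  shows "even (length xs - 1) \<longleftrightarrow> (hd xs \<in> A \<longleftrightarrow> last xs \<in> A)"
  using w
proof (induction xs)
  case Nil then show ?case by (simp add: walk_def)
next
  case (Cons x xs)
  note IH0 = Cons.IH and pr = Cons.prems
  show ?case
  proof (cases xs)
    case Nil then show ?thesis by simp
  next
    case (Cons y ys)
    with pr have ed: "{x,y} \<in> EB" and wt: "walk EB (y#ys)" by (auto simp: walk_Cons2)
    have c: "card {x,y} = 2 \<and> card ({x,y} \<inter> A) = 1" using bspec[OF e ed] .
    have xy: "x \<in> A \<longleftrightarrow> y \<notin> A" by (rule edge_par[OF c[THEN conjunct1] c[THEN conjunct2]])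
    have IH: "even (length (y#ys) - 1) \<longleftrightarrow> (y \<in> A \<longleftrightarrow> last (y#ys) \<in> A)"
      using IH0 wt Cons by simp
    have "length (x#xs) - 1 = Suc (length (y#ys) - 1)" using Cons by simp
    moreover have "hd (x#xs) = x" "last (x#xs) = last (y#ys)" using Cons by simp_all
    ultimately show ?thesis using IH xy by auto
  qed
qed



lemma rho_parity:
  assumes EB: "EB \<subseteq> pairs W" and bip: "\<forall>e\<in>EB. card (e\<inter>A) = 1"
    and conn: "connected_graph W EB" and "x\<in>W" "y\<in>W"
  shows "even (rho_w EB {x,y}) \<longleftrightarrow> (x\<in>A \<longleftrightarrow> y\<in>A)"
proof -
  from conn assms(4,5) obtain xs where xs: "walk EB xs" "hd xs = x" "last xs = y"
    unfolding connected_graph_def by blast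
  then have ex: "\<exists>k. \<exists>xs. walk EB xs \<and> {hd xs, last xs} = {x,y} \<and> length xs = Suc k"
    by (intro exI[of _ "length xs - 1"] exI[of _ xs]) (auto simp: walk_def)
  define k where "k = (LEAST k. \<exists>xs. walk EB xs \<and> {hd xs, last xs} = {x,y} \<and> length xs = Suc k)"
  from LeastI_ex[OF ex] obtain ys where ys: "walk EB ys" "{hd ys, last ys} = {x,y}" "length ys = Suc k"
    unfolding k_def by blast
  have e2: "\<forall>e\<in>EB. card e = 2 \<and> card (e\<inter>A) = 1" using EB bip by (auto simp: pairs_def)
  have "even (length ys - 1) \<longleftrightarrow> (hd ys \<in> A \<longleftrightarrow> last ys \<in> A)" by (rule walk_parity[OF e2 ys(1)])
  moreover from ys(2) have "(hd ys = x \<and> last ys = y) \<or> (hd ys = y \<and> last ys = x)"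
    by (auto simp: doubleton_eq_iff)
  ultimately show ?thesis using ys(3) unfolding rho_w_def k_def[symmetric] by auto
qed



lemma card_pair_par: "x \<noteq> y \<Longrightarrow> even (card ({x,y} \<inter> A)) \<longleftrightarrow> (x\<in>A \<longleftrightarrow> y\<in>A)"
  by (cases "x\<in>A"; cases "y\<in>A") (auto simp: Int_insert_left)



lemma pairs_bij: assumes "bij_betw f W V" shows "bij_betw ((`) f) (pairs W) (pairs V)"
proof -
  have inj: "inj_on f W" using assms by (rule bij_betw_imp_inj_on)
  have fW: "f ` W = V" using assms by (rule bij_betw_imp_surj_on)
  have "inj_on ((`) f) (pairs W)"
    by (rule inj_on_subset[OF inj_on_image_Pow[OF inj]]) (auto simp: pairs_def)
  moreover have "(`) f ` pairs W = pairs V"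
  proof
    show "(`) f ` pairs W \<subseteq> pairs V"
    proof
      fix e' assume "e' \<in> (`) f ` pairs W"
      then obtain e where e: "e \<subseteq> W" "card e = 2" "e' = f ` e" by (auto simp: pairs_def)
      have "card (f ` e) = card e" using inj_on_subset[OF inj e(1)] by (rule card_image)
      then show "e' \<in> pairs V" using e fW by (auto simp: pairs_def)
    qed
  next
    show "pairs V \<subseteq> (`) f ` pairs W"
    proof
      fix e assume e: "e \<in> pairs V"
      let ?d = "inv_into W f ` e"
      have eV: "e \<subseteq> V" "card e = 2" using e by (auto simp: pairs_def)
      have sub: "?d \<subseteq> W" using eV fW by (auto intro: inv_into_into)
      have img: "f ` ?d = e" using eV fW by (simp add: image_inv_into_cancel)
      have "card (f ` ?d) = card ?d" using inj_on_subset[OF inj sub] by (rule card_image)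
      then have "card ?d = 2" using img eV by simp
      then show "e \<in> (`) f ` pairs W" using img sub by (auto simp: pairs_def)
    qed
  qed
  ultimately show ?thesis by (simp add: bij_betw_def)
qed



lemma deg_sum:
  assumes "finite E" "finite A'"
  shows "(\<Sum>e\<in>E. int (card (e \<inter> A'))) = (\<Sum>a\<in>A'. int (degree E a))"
proof -
  have "(\<Sum>e\<in>E. int (card (e \<inter> A'))) = (\<Sum>e\<in>E. \<Sum>a\<in>A'. if a \<in> e then 1 else 0)"
  proof (rule sum.cong[OF refl])
    fix e
    have "e \<inter> A' = {a\<in>A'. a \<in> e}" by auto
    then show "int (card (e \<inter> A')) = (\<Sum>a\<in>A'. if a \<in> e then 1 else 0)"
      using assms(2) by (simp add: sum.inter_filter[symmetric])
  qed
  also have "\<dots> = (\<Sum>a\<in>A'. \<Sum>e\<in>E. if a \<in> e then 1 else 0)" by (rule sum.swap)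
  also have "\<dots> = (\<Sum>a\<in>A'. int (degree E a))"
  proof (rule sum.cong[OF refl])
    fix a
    show "(\<Sum>e\<in>E. if a \<in> e then 1 else 0) = int (degree E a)"
      using assms(1) by (simp add: sum.inter_filter[symmetric] degree_def)
  qed
  finally show ?thesis .
qed




lemma par_mult: fixes a b c :: int shows "(even a \<longleftrightarrow> even b) \<Longrightarrow> (a*c) mod 2 = (b*c) mod 2"
proof -
  assume h: "even a \<longleftrightarrow> even b"
  have "a mod 2 = b mod 2"
  proof (cases "even a")
    case True then show ?thesis using h by (simp add: even_iff_mod_2_eq_zero)
  next
    case False then show ?thesis using h by (metis odd_iff_mod_2_eq_one)
  qed
  then show ?thesis by (metis mod_mult_left_eq)
qed

lemma main_sum:
  assumes fV: "finite V" "E \<subseteq> pairs V" and W: "EB \<subseteq> pairs W" "connected_graph W EB" "A \<subseteq> W"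
    "\<forall>e\<in>EB. card (e\<inter>A) = 1" and f: "bij_betw f W V"
  shows "even (wsum W (wprod_f (rho_w EB) (I_w E) f)) \<longleftrightarrow> even (\<Sum>a\<in>f`A. int (degree E a))"
proof -
  have inj: "inj_on f W" using f by (rule bij_betw_imp_inj_on)
  have fW: "f ` W = V" using f by (rule bij_betw_imp_surj_on)
  have "pairs V \<subseteq> Pow V" by (auto simp: pairs_def)
  then have finP: "finite (pairs V)" using fV(1) finite_subset by blast
  have finE: "finite E" using finP fV(2) by (rule finite_subset[rotated])
  have "f ` A \<subseteq> V" using W(3) fW by blast
  then have finA: "finite (f`A)" using fV(1) by (rule finite_subset)
  define g where "g e' = int (card (e' \<inter> f`A)) * I_w E e'" for e'
  define h where "h e = rho_w EB e * I_w E (f`e)" for e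
  have trm: "h e mod 2 = g (f`e) mod 2" if e: "e\<in>pairs W" for e
  proof -
    from e obtain x y where xy: "e = {x,y}" "x\<noteq>y" "x\<in>W" "y\<in>W"
      unfolding pairs_def by (auto simp: card_2_iff)
    have eW: "e \<subseteq> W" using e by (simp add: pairs_def)
    have "f`e \<inter> f`A = f`(e\<inter>A)" using inj eW W(3) by (simp add: inj_on_image_Int)
    moreover have "card (f`(e\<inter>A)) = card (e\<inter>A)"
      by (rule card_image[OF inj_on_subset[OF inj]]) (use eW in blast)
    ultimately have c: "card (f`e \<inter> f`A) = card (e\<inter>A)" by simp
    have "even (rho_w EB e) \<longleftrightarrow> even (int (card (e\<inter>A)))"
      using rho_parity[OF W(1) W(4) W(2) xy(3,4)] card_pair_par[OF xy(2)] xy(1) by simp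
    then show ?thesis
      unfolding g_def h_def c by (rule par_mult)
  qed
  have "wsum W (wprod_f (rho_w EB) (I_w E) f) = (\<Sum>e\<in>pairs W. h e)"
    unfolding wsum_def wprod_f_def h_def by simp
  then have "wsum W (wprod_f (rho_w EB) (I_w E) f) mod 2 = (\<Sum>e\<in>pairs W. h e mod 2) mod 2"
    by (simp add: mod_sum_eq)
  also have "(\<Sum>e\<in>pairs W. h e mod 2) = (\<Sum>e\<in>pairs W. g (f`e) mod 2)"
    by (rule sum.cong[OF refl]) (rule trm)
  also have "(\<Sum>e\<in>pairs W. g (f`e) mod 2) mod 2 = (\<Sum>e\<in>pairs W. g (f`e)) mod 2"
    by (simp add: mod_sum_eq)
  also have "(\<Sum>e\<in>pairs W. g (f`e)) = (\<Sum>e'\<in>pairs V. g e')"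
    by (rule sum.reindex_bij_betw[OF pairs_bij[OF f]])
  also have "(\<Sum>e'\<in>pairs V. g e') = (\<Sum>e\<in>E. int (card (e \<inter> f`A)))"
  proof -
    have "(\<Sum>e'\<in>pairs V. g e') = (\<Sum>e'\<in>pairs V. if e' \<in> E then int (card (e' \<inter> f`A)) else 0)"
      unfolding g_def I_w_def by (rule sum.cong) auto
    also have "\<dots> = (\<Sum>e\<in>{e'\<in>pairs V. e'\<in>E}. int (card (e \<inter> f`A)))"
      using finP by (simp add: sum.inter_filter)
    also have "{e'\<in>pairs V. e'\<in>E} = E" using fV(2) by auto
    finally show ?thesis .
  qed
  also have "\<dots> = (\<Sum>a\<in>f`A. int (degree E a))" by (rule deg_sum[OF finE finA])
  finally show ?thesis by (simp add: even_iff_mod_2_eq_zero)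
qed


lemma walk_single: "walk E [x]" by (simp add: walk_def)

theorem mainTheorem20:
  fixes V :: "'a set" and E :: "'a set set"
  assumes "simple_graph V E" and "card V \<ge> 2"
  shows "(\<forall>(W::'a set) EB. simple_graph W EB \<and> card W = card V \<and> connected_graph W EB \<and> bipartite W EB
            \<longrightarrow> wsum W ` wprod W V (rho_w EB) (I_w E) \<subseteq> {k. even k})
         \<longleftrightarrow> (\<forall>v\<in>V. even (degree E v))"
proof
  have fV: "finite V" "E \<subseteq> pairs V" using assms(1) by (auto simp: simple_graph_def)
  assume H: "\<forall>(W::'a set) EB. simple_graph W EB \<and> card W = card V \<and> connected_graph W EB \<and> bipartite W EB
            \<longrightarrow> wsum W ` wprod W V (rho_w EB) (I_w E) \<subseteq> {k. even k}"
  show "\<forall>v\<in>V. even (degree E v)"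
  proof (rule ccontr)
    assume "\<not> (\<forall>v\<in>V. even (degree E v))"
    then obtain v where v: "v\<in>V" "odd (degree E v)" by blast
    define EB where "EB = {{v,u} | u. u\<in>V \<and> u\<noteq>v}"
    have EBp: "EB \<subseteq> pairs V" using v(1) by (auto simp: EB_def pairs_def)
    have sg: "simple_graph V EB" using fV EBp by (simp add: simple_graph_def)
    have bipA: "\<forall>e\<in>EB. card (e\<inter>{v}) = 1" by (auto simp: EB_def)
    have bip: "bipartite V EB" unfolding bipartite_def
      by (intro exI[of _ "{v}"]) (use bipA v(1) in auto)
    have conn: "connected_graph V EB" unfolding connected_graph_def
    proof (intro ballI)
      fix x y assume x: "x\<in>V" and y: "y\<in>V"
      have ex: "{v,u} \<in> EB" "{u,v} \<in> EB" if "u\<in>V" "u\<noteq>v" for u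
        using that by (auto simp: EB_def insert_commute)
      show "\<exists>xs. walk EB xs \<and> hd xs = x \<and> last xs = y"
      proof (cases "x = y")
        case True then show ?thesis by (intro exI[of _ "[x]"]) (simp add: walk_def)
      next
        case False
        show ?thesis
        proof (cases "x = v")
          case True then show ?thesis using False ex y
            by (intro exI[of _ "[x,y]"]) (simp add: walk_Cons2 walk_single)
        next
          case xv: False
          show ?thesis
          proof (cases "y = v")
            case True then show ?thesis using xv ex x
              by (intro exI[of _ "[x,y]"]) (simp add: walk_Cons2 walk_single)
          next
            case False then show ?thesis using xv ex x y
              by (intro exI[of _ "[x,v,y]"]) (simp add: walk_Cons2 walk_single)
          qed
        qed
      qed
    qed
    have "wsum V (wprod_f (rho_w EB) (I_w E) id) \<in> wsum V ` wprod V V (rho_w EB) (I_w E)"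
      unfolding wprod_def by (intro imageI) (auto intro: bij_betw_id)
    moreover have "wsum V ` wprod V V (rho_w EB) (I_w E) \<subseteq> {k. even k}"
      using H sg conn bip by simp
    ultimately have "even (wsum V (wprod_f (rho_w EB) (I_w E) id))" by blast
    moreover have "even (wsum V (wprod_f (rho_w EB) (I_w E) id)) \<longleftrightarrow> even (\<Sum>a\<in>id`{v}. int (degree E a))"
      by (rule main_sum[OF fV EBp conn _ bipA bij_betw_id]) (use v in auto)
    ultimately show False using v(2) by simp
  qed
next
  have fV: "finite V" "E \<subseteq> pairs V" using assms(1) by (auto simp: simple_graph_def)
  assume D: "\<forall>v\<in>V. even (degree E v)"
  show "\<forall>(W::'a set) EB. simple_graph W EB \<and> card W = card V \<and> connected_graph W EB \<and> bipartite W EB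
            \<longrightarrow> wsum W ` wprod W V (rho_w EB) (I_w E) \<subseteq> {k. even k}"
  proof (intro allI impI subsetI)
    fix W :: "'a set" and EB k
    assume a: "simple_graph W EB \<and> card W = card V \<and> connected_graph W EB \<and> bipartite W EB"
      and k: "k \<in> wsum W ` wprod W V (rho_w EB) (I_w E)"
    from k obtain f where f: "bij_betw f W V" "k = wsum W (wprod_f (rho_w EB) (I_w E) f)"
      unfolding wprod_def by blast
    from a obtain A where A: "A \<subseteq> W" "\<forall>e\<in>EB. card (e\<inter>A) = 1" unfolding bipartite_def by blast
    have EBp: "EB \<subseteq> pairs W" using a by (simp add: simple_graph_def)
    have fA: "f`A \<subseteq> V" using A(1) f(1) bij_betw_imp_surj_on by blast
    have "even (\<Sum>a\<in>f`A. int (degree E a))"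
      using D fA by (intro dvd_sum) auto
    moreover have "connected_graph W EB" using a by simp
    ultimately show "k \<in> {k. even k}"
      using main_sum[OF fV EBp _ A(1) A(2) f(1)] f(2) by simp
  qed
qed


end
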